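(* For every cake instance (i.e., $m=0$), the allocation returned by Generalized MES satisfies cake EJR.
   Context: Model: There is a set of agents $N=\{1,\dots,n\}$. The resource $R$ consists of a cake $C=[0,c]$ for a real $c\ge 0$ and a set of indivisible goods $G=\{g_1,\dots,g_m\}$ for an integer $m\ge 0$, with $\max(c,m)>0$. A piece of cake is a union of finitely many disjoint closed subintervals of $C$; its length $\ell(\cdot)$ is the sum of the lengths of its intervals. A bundle $R'=(C',G')$ consists of a piece of cake $C'\subseteq C$ and a set $G'\subseteq G$; its size is $s(R')=\ell(C')+|G'|$. Each agent $i$ approves a bundle $R_i=(C_i,G_i)$, and her utility for a bundle $R'$ is $u_i(R')=\ell(C_i\cap C')+|G_i\cap G'|$. A parameter $\alpha\in(0,c+m]$ is given; an allocation is a bundle $A$ with $s(A)\le\alpha$. A cake instance is one with $m=0$. For a real $t>0$, $N^*\subseteq N$ is $t$-cohesive if $|N^*|\ge t n/\alpha$ and $s(\bigcap_{i\in N^*}R_i)\ge t$. Cake EJR: an allocation $A$ satisfies cake EJR if for every real $t>0$ and every $t$-cohesive group $N^*$, some $j\in N^*$ has $u_j(A)\ge t$. Generalized MES (Method of Equal Shares): Step 1: set $R'=(C',G')=(\emptyset,\emptyset)$ and budgets $b_i=\alpha/n$ for all $i$; agents still present are "remaining". Step 2: divide the remaining cake into intervals $I_1,\dots,I_k$ such that each agent approves each interval entirely or not at all. For an interval $I_j=[x_0,x_1]$, $x\in(x_0,x_1]$ and $\rho\ge 0$, $I_j$ is $(x,\rho)$-affordable if $\sum_{i\in N_{I_j}}\min(b_i,(x-x_0)\rho)=x-x_0$,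 where $N_{I_j}$ is the set of remaining agents approving $I_j$. A remaining good $g$ is $\rho$-affordable if $\sum_{i\in N_g}\min(b_i,\rho)=1$, where $N_g$ is the set of remaining agents approving $g$. Step 3: if no $\rho$-affordable good and no $(x,\rho)$-affordable piece of cake exists for any $\rho$, return $R'$. Otherwise take either an interval $I_j$ with the smallest $\rho$ together with the largest $x$ such that $I_j$ is $(x,\rho)$-affordable, or a good $g$ with the smallest $\rho$ such that $g$ is $\rho$-affordable, whichever has smaller $\rho$. In the first case deduct $\min(b_i,(x-x_0)\rho)$ from $b_i$ for each $i\in N_{I_j}$, remove $[x_0,x]$ from the remaining cake and add it to $C'$; in the second case deduct $\min(b_i,\rho)$ from $b_i$ for each $i\in N_g$, remove $g$ from the remaining goods and add it to $G'$. Remove all agents with zero budget and go to Step 2. *)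

theory Defs
  imports "HOL-Analysis.Analysis"
begin

text \<open>Cake instances (m = 0). Agents are 1..n, the cake is [0,c]; agent i approves
  the piece C i. Lengths are Lebesgue measure.\<close>

definition len :: "real set \<Rightarrow> real" where
  "len S = measure lborel S"

definition is_piece :: "real \<Rightarrow> real set \<Rightarrow> bool" where
  "is_piece c S \<longleftrightarrow> S \<subseteq> {0..c} \<and>
     (\<exists>F. finite F \<and> (\<forall>I\<in>F. \<exists>a b. a \<le> b \<and> I = {a..b}) \<and> pairwise disjnt F \<and> S = \<Union>F)"

definition t_cohesive :: "nat \<Rightarrow> real \<Rightarrow> (nat \<Rightarrow> real set) \<Rightarrow> real \<Rightarrow> nat set \<Rightarrow> bool" where
  "t_cohesive n \<alpha> C t N' \<longleftrightarrow> N' \<subseteq> {1..n} \<and> real (card N') \<ge> t * real n / \<alpha>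
      \<and> len (\<Inter>i\<in>N'. C i) \<ge> t"

definition cake_EJR :: "nat \<Rightarrow> real \<Rightarrow> (nat \<Rightarrow> real set) \<Rightarrow> real set \<Rightarrow> bool" where
  "cake_EJR n \<alpha> C A \<longleftrightarrow>
     (\<forall>t>0. \<forall>N'. t_cohesive n \<alpha> C t N' \<longrightarrow> (\<exists>j\<in>N'. len (C j \<inter> A) \<ge> t))"

text \<open>State: (allocated cake A, budgets b). Remaining cake is {0..c} - A;
  remaining agents are those with positive budget.\<close>

definition remaining :: "nat \<Rightarrow> (nat \<Rightarrow> real) \<Rightarrow> nat set" where
  "remaining n b = {i\<in>{1..n}. b i > 0}"

definition approvers :: "nat \<Rightarrow> (nat \<Rightarrow> real set) \<Rightarrow> (nat \<Rightarrow> real) \<Rightarrow> real \<times> real \<Rightarrow> nat set" where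
  "approvers n C b I = {i\<in>remaining n b. {fst I..snd I} \<subseteq> C i}"

definition valid_division :: "real \<Rightarrow> nat \<Rightarrow> (nat \<Rightarrow> real set) \<Rightarrow> real set \<Rightarrow> (real \<times> real) set \<Rightarrow> bool" where
  "valid_division c n C A D \<longleftrightarrow> finite D
     \<and> (\<forall>I\<in>D. fst I < snd I \<and>
          (\<forall>i\<in>{1..n}. {fst I..snd I} \<subseteq> C i \<or> len ({fst I..snd I} \<inter> C i) = 0))
     \<and> (\<forall>I\<in>D. \<forall>J\<in>D. I \<noteq> J \<longrightarrow> snd I \<le> fst J \<or> snd J \<le> fst I)
     \<and> emeasure lborel ((\<Union>I\<in>D. {fst I..snd I}) - ({0..c} - A)) = 0
     \<and> emeasure lborel (({0..c} - A) - (\<Union>I\<in>D. {fst I..snd I})) = 0"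

definition affordable :: "nat \<Rightarrow> (nat \<Rightarrow> real set) \<Rightarrow> (nat \<Rightarrow> real) \<Rightarrow> real \<times> real \<Rightarrow> real \<Rightarrow> real \<Rightarrow> bool" where
  "affordable n C b I x \<rho> \<longleftrightarrow> fst I < x \<and> x \<le> snd I \<and> \<rho> \<ge> 0 \<and>
     (\<Sum>i\<in>approvers n C b I. min (b i) ((x - fst I) * \<rho>)) = x - fst I"

text \<open>One iteration (Steps 2 and 3, nondeterministic in the division and tie-breaking).\<close>
definition mes_step :: "real \<Rightarrow> nat \<Rightarrow> (nat \<Rightarrow> real set) \<Rightarrow>
    real set \<times> (nat \<Rightarrow> real) \<Rightarrow> real set \<times> (nat \<Rightarrow> real) \<Rightarrow> bool" where
  "mes_step c n C s s' \<longleftrightarrow> (case s of (A, b) \<Rightarrow>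
     \<exists>D I x \<rho>. valid_division c n C A D \<and> I \<in> D \<and> affordable n C b I x \<rho>
       \<and> (\<forall>J\<in>D. \<forall>x' \<rho>'. affordable n C b J x' \<rho>' \<longrightarrow> \<rho> \<le> \<rho>')
       \<and> (\<forall>x'. affordable n C b I x' \<rho> \<longrightarrow> x' \<le> x)
       \<and> s' = (A \<union> {fst I..x},
               (\<lambda>i. if i \<in> approvers n C b I then b i - min (b i) ((x - fst I) * \<rho>) else b i)))"

definition mes_terminal :: "real \<Rightarrow> nat \<Rightarrow> (nat \<Rightarrow> real set) \<Rightarrow> real set \<Rightarrow> (nat \<Rightarrow> real) \<Rightarrow> bool" where
  "mes_terminal c n C A b \<longleftrightarrow>
     (\<exists>D. valid_division c n C A D \<and> (\<forall>I\<in>D. \<forall>x \<rho>. \<not> affordable n C b I x \<rho>))"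

definition mes_output :: "real \<Rightarrow> nat \<Rightarrow> real \<Rightarrow> (nat \<Rightarrow> real set) \<Rightarrow> real set \<Rightarrow> bool" where
  "mes_output c n \<alpha> C A \<longleftrightarrow>
     (\<exists>b. (mes_step c n C)\<^sup>*\<^sup>* ({}, (\<lambda>_. \<alpha> / real n)) (A, b) \<and> mes_terminal c n C A b)"

end

theory Submission
  imports Defs
begin

lemma piece_compact:
  assumes "is_piece c S" shows "compact S" "S \<subseteq> {0..c}"
proof -
  from assms obtain F where F: "finite F" "\<forall>I\<in>F. \<exists>a b. a \<le> b \<and> I = {a..b}" "S = \<Union>F"
    and sub: "S \<subseteq> {0..c}" unfolding is_piece_def by blast
  have "\<forall>I\<in>F. closed I" using F(2) by auto
  then have "closed S" using F closed_Union by blast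
  then show "compact S" using sub by (meson bounded_closed_interval bounded_subset compact_eq_bounded_closed)
  show "S \<subseteq> {0..c}" by fact
qed

lemma gain:
  fixes P A :: "real set"
  assumes "compact P" "closed A" "{a..x} \<subseteq> P" "a \<le> x"
    "emeasure lborel ({a..x} \<inter> A) = 0"
  shows "len (P \<inter> A) + (x - a) \<le> len (P \<inter> (A \<union> {a..x}))"
proof -
  have e: "P \<inter> (A \<union> {a..x}) = (P \<inter> A) \<union> {a..x}" using assms(3) by auto
  have f1: "P \<inter> A \<in> fmeasurable lborel"
    using assms by (intro fmeasurable_compact) (simp add: compact_Int_closed)
  have f2: "{a..x} \<in> fmeasurable lborel" by (intro fmeasurable_compact) simp
  have "emeasure lborel (P \<inter> A \<inter> {a..x}) \<le> emeasure lborel ({a..x} \<inter> A)"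
    using assms(2) by (intro emeasure_mono) auto
  then have z: "measure lborel (P \<inter> A \<inter> {a..x}) = 0" using assms(5)
    by (simp add: measure_def)
  show ?thesis unfolding len_def e
    using measure_Un3[OF f1 f2] z assms(4) by simp
qed

lemma len_mono:
  fixes P A A' :: "real set"
  assumes "compact P" "closed A'" "A \<subseteq> A'" "closed A"
  shows "len (P \<inter> A) \<le> len (P \<inter> A')"
  unfolding len_def
  using assms by (intro measure_mono_fmeasurable) (auto intro: fmeasurable_compact compact_Int_closed borel_closed closed_Int compact_imp_closed)


lemma exists_full:
  fixes A :: "real set"
  assumes vd: "valid_division c n C A D" and clA: "closed A"
    and NN: "N' \<subseteq> {1..n}" "N' \<noteq> {}"
    and pos: "\<forall>j\<in>N'. b j > 0"
    and pc: "\<forall>i\<in>{1..n}. is_piece c (C i)"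
    and coh: "len (\<Inter>i\<in>N'. C i) \<ge> t"
    and small: "\<forall>j\<in>N'. len (C j \<inter> A) < t"
  shows "\<exists>J\<in>D. N' \<subseteq> approvers n C b J"
proof -
  define K where "K = (\<Inter>i\<in>N'. C i)"
  define U where "U = (\<Union>I\<in>D. {fst I..snd I})"
  obtain j0 where j0: "j0 \<in> N'" using NN by auto
  have cC: "\<And>i. i \<in> N' \<Longrightarrow> compact (C i)" using pc NN piece_compact by blast
  have KC: "K \<subseteq> C j0" using j0 K_def by auto
  have cK: "compact K" unfolding K_def using cC NN
    by (intro compact_Inter) auto
  have fD: "finite D" using vd unfolding valid_division_def by auto
  have cU: "closed U" unfolding U_def using fD by (intro closed_UN) auto
  have nul: "emeasure lborel (({0..c} - A) - U) = 0" using vd unfolding valid_division_def U_def by auto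
  have nul2: "emeasure lborel (U - ({0..c} - A)) = 0" using vd unfolding valid_division_def U_def by auto
  have Ksub: "K \<subseteq> {0..c}" using KC pc NN j0 piece_compact by blast
  have "\<exists>I\<in>D. emeasure lborel (K \<inter> {fst I..snd I}) \<noteq> 0"
  proof (rule ccontr)
    assume "\<not> ?thesis"
    then have z: "\<forall>I\<in>D. emeasure lborel (K \<inter> {fst I..snd I}) = 0" by auto
    have "emeasure lborel (\<Union>I\<in>D. K \<inter> {fst I..snd I}) \<le> (\<Sum>I\<in>D. emeasure lborel (K \<inter> {fst I..snd I}))"
      using fD cK by (intro emeasure_subadditive_finite) (auto intro: borel_closed compact_imp_closed closed_Int)
    then have z2: "emeasure lborel (\<Union>I\<in>D. K \<inter> {fst I..snd I}) = 0" using z by simp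
    have sub: "K \<subseteq> (K \<inter> A) \<union> ((\<Union>I\<in>D. K \<inter> {fst I..snd I}) \<union> (({0..c} - A) - U))"
      using Ksub unfolding U_def by auto
    have m1: "K \<inter> A \<in> sets lborel" using cK clA by (auto intro: borel_closed compact_imp_closed closed_Int)
    have m2: "(\<Union>I\<in>D. K \<inter> {fst I..snd I}) \<in> sets lborel" using fD cK
      by (intro sets.finite_UN) (auto intro: borel_closed compact_imp_closed closed_Int)
    have m3: "({0..c} - A) - U \<in> sets lborel" using cU clA by (auto intro: borel_closed)
    have "emeasure lborel K \<le> emeasure lborel ((K \<inter> A) \<union> ((\<Union>I\<in>D. K \<inter> {fst I..snd I}) \<union> (({0..c} - A) - U)))"
      using sub m1 m2 m3 by (intro emeasure_mono) auto
    also have "\<dots> \<le> emeasure lborel (K \<inter> A) + emeasure lborel ((\<Union>I\<in>D. K \<inter> {fst I..snd I}) \<union> (({0..c} - A) - U))"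
      using m1 m2 m3 by (intro emeasure_subadditive) auto
    also have "\<dots> \<le> emeasure lborel (K \<inter> A) + (emeasure lborel (\<Union>I\<in>D. K \<inter> {fst I..snd I}) + emeasure lborel (({0..c} - A) - U))"
      using m2 m3 by (intro add_left_mono emeasure_subadditive) auto
    also have "\<dots> = emeasure lborel (K \<inter> A)" using z2 nul by simp
    finally have le: "emeasure lborel K \<le> emeasure lborel (K \<inter> A)" .
    have fin1: "emeasure lborel K \<noteq> top" using cK
      by (metis emeasure_bounded_finite compact_imp_bounded less_irrefl top.extremum_strict infinity_ennreal_def)
    have fin2: "emeasure lborel (K \<inter> A) \<noteq> top" using cK clA
      by (metis emeasure_bounded_finite compact_imp_bounded bounded_Int less_irrefl top.extremum_strict infinity_ennreal_def)
    have "len K \<le> len (K \<inter> A)" unfolding len_def using le fin1 fin2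
      by (simp add: emeasure_eq_ennreal_measure)
    also have "\<dots> \<le> len (C j0 \<inter> A)" using KC cC[OF j0] clA m1
      unfolding len_def by (intro measure_mono_fmeasurable)
        (auto intro: fmeasurable_compact compact_Int_closed borel_closed closed_Int compact_imp_closed)
    also have "\<dots> < t" using small j0 by auto
    finally show False using coh K_def by simp
  qed
  then obtain I where I: "I \<in> D" "emeasure lborel (K \<inter> {fst I..snd I}) \<noteq> 0" by auto
  have "N' \<subseteq> approvers n C b I"
  proof
    fix i assume i: "i \<in> N'"
    have "emeasure lborel (K \<inter> {fst I..snd I}) \<le> emeasure lborel ({fst I..snd I} \<inter> C i)"
      using i cC[OF i] unfolding K_def by (intro emeasure_mono) (auto intro: borel_closed compact_imp_closed closed_Int)
    then have ne: "emeasure lborel ({fst I..snd I} \<inter> C i) \<noteq> 0" using I(2) by (auto simp: bot_unique)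
    have fin: "emeasure lborel ({fst I..snd I} \<inter> C i) \<noteq> top"
      by (metis emeasure_bounded_finite bounded_closed_interval bounded_Int less_irrefl top.extremum_strict infinity_ennreal_def)
    have "len ({fst I..snd I} \<inter> C i) \<noteq> 0" unfolding len_def
      using ne fin emeasure_eq_ennreal_measure by fastforce
    then have "{fst I..snd I} \<subseteq> C i" using vd I(1) i NN unfolding valid_division_def by blast
    then show "i \<in> approvers n C b I" using i NN pos unfolding approvers_def remaining_def by auto
  qed
  then show ?thesis using I by auto
qed

definition inv :: "nat \<Rightarrow> real \<Rightarrow> (nat \<Rightarrow> real set) \<Rightarrow> real \<Rightarrow> nat set \<Rightarrow> real set \<times> (nat \<Rightarrow> real) \<Rightarrow> bool" where
  "inv n \<alpha> C t N' s \<longleftrightarrow> closed (fst s) \<and> ((\<exists>j\<in>N'. t \<le> len (C j \<inter> fst s)) \<or>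
     (\<forall>j\<in>N'. snd s j > 0 \<and> (\<alpha> / real n - snd s j) * real (card N') \<le> len (C j \<inter> fst s)))"

lemma afford_exists:
  assumes S: "finite S" "S \<noteq> {}" "S = approvers n C b J" "\<forall>i\<in>S. b i > 0" "fst J < snd J"
  shows "affordable n C b J (fst J + min (snd J - fst J) (real (card S) * Min (b ` S))) (1 / real (card S))"
proof -
  define m where "m = Min (b ` S)"
  have mpos: "m > 0" unfolding m_def using S by (subst Min_gr_iff) auto
  have mle: "\<And>i. i \<in> S \<Longrightarrow> m \<le> b i" unfolding m_def using S by auto
  define k where "k = real (card S)"
  have kpos: "k > 0" unfolding k_def using S by (simp add: card_gt_0_iff)
  define d where "d = min (snd J - fst J) (k * m)"
  have dpos: "d > 0" unfolding d_def using S kpos mpos by auto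
  have dle: "d / k \<le> m" unfolding d_def using kpos by (simp add: divide_le_eq mult.commute)
  have "(\<Sum>i\<in>S. min (b i) (d * (1/k))) = (\<Sum>i\<in>S. d / k)"
  proof (intro sum.cong refl)
    fix i assume "i \<in> S"
    then have "d / k \<le> b i" using dle mle[of i] by linarith
    then show "min (b i) (d * (1/k)) = d / k" by (simp add: min_def)
  qed
  also have "\<dots> = d" using kpos unfolding k_def by simp
  finally have sm: "(\<Sum>i\<in>S. min (b i) (d * (1/k))) = d" .
  show ?thesis unfolding affordable_def
    using dpos sm S(3)[symmetric] unfolding d_def k_def m_def by (auto simp: min_def)
qed

lemma approvers_finite: "finite (approvers n C b J)"
  unfolding approvers_def remaining_def by auto

lemma step_inv:
  fixes A A' :: "real set"
  assumes st: "mes_step c n C (A, b) (A', b')"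
    and iv: "inv n \<alpha> C t N' (A, b)"
    and NN: "N' \<subseteq> {1..n}" "N' \<noteq> {}"
    and pc: "\<forall>i\<in>{1..n}. is_piece c (C i)"
    and coh: "len (\<Inter>i\<in>N'. C i) \<ge> t"
    and big: "t \<le> \<alpha> / real n * real (card N')"
  shows "inv n \<alpha> C t N' (A', b')"
proof -
  from st obtain D I x \<rho> where vd: "valid_division c n C A D" and ID: "I \<in> D"
    and af: "affordable n C b I x \<rho>"
    and mn: "\<forall>J\<in>D. \<forall>x' \<rho>'. affordable n C b J x' \<rho>' \<longrightarrow> \<rho> \<le> \<rho>'"
    and A': "A' = A \<union> {fst I..x}"
    and b': "b' = (\<lambda>i. if i \<in> approvers n C b I then b i - min (b i) ((x - fst I) * \<rho>) else b i)"
    unfolding mes_step_def by auto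
  have clA: "closed A" using iv unfolding inv_def by auto
  have clA': "closed A'" using clA A' by auto
  have AA': "A \<subseteq> A'" using A' by auto
  have cC: "\<And>i. i \<in> N' \<Longrightarrow> compact (C i)" using pc NN piece_compact by blast
  have mono: "\<And>j. j \<in> N' \<Longrightarrow> len (C j \<inter> A) \<le> len (C j \<inter> A')"
    using len_mono cC clA clA' AA' by blast
  show ?thesis
  proof (cases "\<exists>j\<in>N'. t \<le> len (C j \<inter> A)")
    case True
    then show ?thesis using mono clA' unfolding inv_def by (fastforce)
  next
    case False
    then have small: "\<forall>j\<in>N'. len (C j \<inter> A) < t" by auto
    have sec: "\<forall>j\<in>N'. b j > 0 \<and> (\<alpha> / real n - b j) * real (card N') \<le> len (C j \<inter> A)"
      using iv False unfolding inv_def by auto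
    obtain J where J: "J \<in> D" "N' \<subseteq> approvers n C b J"
      using exists_full[where b=b, OF vd clA NN _ pc coh small] sec by auto
    define S where "S = approvers n C b J"
    have Sf: "finite S" unfolding S_def by (rule approvers_finite)
    have Sne: "S \<noteq> {}" using J NN unfolding S_def by auto
    have Spos: "\<forall>i\<in>S. b i > 0" unfolding S_def approvers_def remaining_def by auto
    have Jlt: "fst J < snd J" using vd J unfolding valid_division_def by auto
    have "\<rho> \<le> 1 / real (card S)"
      using mn J(1) afford_exists[OF Sf Sne S_def Spos Jlt] by blast
    also have "\<dots> \<le> 1 / real (card N')"
    proof -
      have c1: "card N' \<le> card S" using J(2) Sf card_mono S_def by blast
      have c0: "card N' > 0" using NN by (metis card_gt_0_iff finite_atLeastAtMost finite_subset)
      show ?thesis using c1 c0 by (intro divide_left_mono) auto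
    qed
    finally have rho: "\<rho> \<le> 1 / real (card N')" .
    have rho0: "\<rho> \<ge> 0" and xlt: "fst I < x" "x \<le> snd I" using af unfolding affordable_def by auto
    define d where "d = x - fst I"
    have dpos: "d > 0" using xlt d_def by auto
    have kpos: "real (card N') > 0" using NN by (auto simp: card_gt_0_iff finite_subset)
    have drk: "d * \<rho> * real (card N') \<le> d"
    proof -
      have "\<rho> * real (card N') \<le> 1" using rho kpos by (simp add: le_divide_eq)
      then show ?thesis using mult_left_mono[of "\<rho> * real (card N')" 1 d] dpos by (simp add: mult.assoc)
    qed
    have each: "b' j > 0 \<and> (\<alpha> / real n - b' j) * real (card N') \<le> len (C j \<inter> A') \<or> t \<le> len (C j \<inter> A')"
      if j: "j \<in> N'" for j
    proof -
      have bj: "b j > 0" "(\<alpha> / real n - b j) * real (card N') \<le> len (C j \<inter> A)" using sec j by auto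
      have key: "(\<alpha> / real n - b' j) * real (card N') \<le> len (C j \<inter> A')"
      proof (cases "j \<in> approvers n C b I")
        case True
        have sub: "{fst I..x} \<subseteq> C j" using True xlt unfolding approvers_def by auto
        have nulU: "emeasure lborel ((\<Union>I\<in>D. {fst I..snd I}) - ({0..c} - A)) = 0"
          using vd unfolding valid_division_def by auto
        have fD: "finite D" using vd unfolding valid_division_def by auto
        have "emeasure lborel ({fst I..x} \<inter> A) \<le> emeasure lborel ((\<Union>I\<in>D. {fst I..snd I}) - ({0..c} - A))"
        proof (rule emeasure_mono)
          show "{fst I..x} \<inter> A \<subseteq> (\<Union>I\<in>D. {fst I..snd I}) - ({0..c} - A)" using ID xlt by auto
          have h: "closed (\<Union>I\<in>D. {fst I..snd I})" using fD by (intro closed_UN) auto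
          have h1: "(\<Union>I\<in>D. {fst I..snd I}) \<in> sets borel" using borel_closed[OF h] .
          have h2: "{0..c} - A \<in> sets borel" using borel_closed[OF clA] by simp
          show "(\<Union>I\<in>D. {fst I..snd I}) - ({0..c} - A) \<in> sets lborel" using sets.Diff[OF h1 h2] by simp
        qed
        then have z: "emeasure lborel ({fst I..x} \<inter> A) = 0" using nulU by simp
        have g: "len (C j \<inter> A) + d \<le> len (C j \<inter> A')"
          unfolding A' d_def using gain[OF cC[OF j] clA sub _ z] xlt by simp
        have p: "b j - b' j \<le> d * \<rho>" using True b' bj d_def by auto
        have "(\<alpha> / real n - b' j) * real (card N') \<le> (\<alpha> / real n - b j) * real (card N') + d * \<rho> * real (card N')"
        proof -
          have "(b j - b' j) * real (card N') \<le> (d * \<rho>) * real (card N')"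
            using p kpos by (intro mult_right_mono) auto
          then show ?thesis by (simp add: algebra_simps)
        qed
        then show ?thesis using bj(2) drk g by linarith
      next
        case False
        then show ?thesis using bj mono[OF j] b' by auto
      qed
      have nn: "b' j \<ge> 0" using bj b' by auto
      show ?thesis
      proof (cases "b' j > 0")
        case True then show ?thesis using key by auto
      next
        case False
        then have "b' j = 0" using nn by auto
        then show ?thesis using key big by auto
      qed
    qed
    show ?thesis
    proof (cases "\<exists>j\<in>N'. t \<le> len (C j \<inter> A')")
      case True then show ?thesis using clA' unfolding inv_def by auto
    next
      case False then show ?thesis using each clA' unfolding inv_def by auto
    qed
  qed
qed

theorem mainTheorem8:
  fixes n :: nat and c \<alpha> :: real and C :: "nat \<Rightarrow> real set" and A :: "real set"
  assumes "n \<ge> 1" and "c > 0" and "0 < \<alpha>" and "\<alpha> \<le> c"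
    and "\<forall>i\<in>{1..n}. is_piece c (C i)"
    and "mes_output c n \<alpha> C A"
  shows "cake_EJR n \<alpha> C A"
proof -
  from assms(6) obtain b where rt: "(mes_step c n C)\<^sup>*\<^sup>* ({}, (\<lambda>_. \<alpha> / real n)) (A, b)"
    and tm: "mes_terminal c n C A b" unfolding mes_output_def by auto
  have pc: "\<forall>i\<in>{1..n}. is_piece c (C i)" by fact
  have npos: "real n > 0" using assms(1) by auto
  show ?thesis unfolding cake_EJR_def
  proof (intro allI impI)
    fix t N' assume t: "t > 0" and coh: "t_cohesive n \<alpha> C t N'"
    have NN: "N' \<subseteq> {1..n}" and cd: "real (card N') \<ge> t * real n / \<alpha>"
      and lK: "len (\<Inter>i\<in>N'. C i) \<ge> t" using coh unfolding t_cohesive_def by auto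
    have tn: "t * real n / \<alpha> > 0" using t npos assms(3) by simp
    have Nne: "N' \<noteq> {}" using cd tn by auto
    have big: "t \<le> \<alpha> / real n * real (card N')"
      using cd npos assms(3) by (simp add: field_simps)
    have inv0: "inv n \<alpha> C t N' s" if "(mes_step c n C)\<^sup>*\<^sup>* ({}, (\<lambda>_. \<alpha> / real n)) s" for s
      using that
    proof (induction rule: rtranclp_induct)
      case base
      show ?case unfolding inv_def using npos assms(3) by (simp add: len_def)
    next
      case (step y z)
      obtain A1 b1 where y: "y = (A1, b1)" by fastforce
      obtain A2 b2 where z: "z = (A2, b2)" by fastforce
      show ?case using step_inv[of c n C A1 b1 A2 b2 \<alpha> t N'] step y z NN Nne pc lK big by auto
    qed
    have iv: "inv n \<alpha> C t N' (A, b)" using inv0[OF rt] .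
    show "\<exists>j\<in>N'. t \<le> len (C j \<inter> A)"
    proof (rule ccontr)
      assume nt: "\<not> ?thesis"
      then have small: "\<forall>j\<in>N'. len (C j \<inter> A) < t" by auto
      have sec: "\<forall>j\<in>N'. b j > 0" and clA: "closed A" using iv nt unfolding inv_def by auto
      from tm obtain D where vd: "valid_division c n C A D"
        and na: "\<forall>I\<in>D. \<forall>x \<rho>. \<not> affordable n C b I x \<rho>" unfolding mes_terminal_def by auto
      obtain J where J: "J \<in> D" "N' \<subseteq> approvers n C b J"
        using exists_full[where b=b, OF vd clA NN Nne sec pc lK small] by auto
      define S where "S = approvers n C b J"
      have Sf: "finite S" unfolding S_def by (rule approvers_finite)
      have Sne: "S \<noteq> {}" using J Nne unfolding S_def by auto
      have Spos: "\<forall>i\<in>S. b i > 0" unfolding S_def approvers_def remaining_def by auto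
      have Jlt: "fst J < snd J" using vd J unfolding valid_division_def by auto
      show False using na J(1) afford_exists[OF Sf Sne S_def Spos Jlt] by blast
    qed
  qed
qed

end
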